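(* Consider two firms $i\in\{1,2\}$ that simultaneously choose whether to enter a market ($y_i=1$) or not ($y_i=0$), where, when a lump-sum subsidy $\hat\tau\ge0$ is paid to any firm that enters, firm $i$'s profit is $y_i\big[\alpha+\hat\tau+\eta(1-y_{-i})-\mathbf e_i\big]$, with $(\alpha,\eta)\in\mathbb R^2$ and $\mathbf e=(\mathbf e_1,\mathbf e_2)\sim N(0,I_2)$ observed by both firms. Suppose firms behave according to strategic ambiguity aversion (SAA): each firm enters if entering is its unique rationalizable action, and does not enter otherwise (so behavior is rationalizable and no firm enters when both actions are rationalizable for it). Let $P(\hat\tau)$ be the probability (over $\mathbf e$) that neither firm enters. Then there exist a nonempty open set $\Xi\subseteq\mathbb R^2$ and a threshold $\bar\tau>0$ such that if $(\alpha,\eta)\in\Xi$ and $\hat\tau<\bar\tau$, then the probability that the market is not served is increasing in the size of the subsidy, i.e. $P$ is increasing on $[0,\bar\tau)$.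
   Context: Rationalizable actions are those surviving iterated elimination of strictly dominated strategies in the complete-information game with the profits given. *)

theory Defs
  imports "HOL-Probability.Probability"
begin

definition profit :: "real \<Rightarrow> real \<Rightarrow> real \<Rightarrow> real \<Rightarrow> nat \<Rightarrow> nat \<Rightarrow> real" where
  "profit \<alpha> \<eta> \<tau> ei yi yo = real yi * (\<alpha> + \<tau> + \<eta> * (1 - real yo) - ei)"

text \<open>Iterated elimination of strictly dominated strategies in a two-player game
  with action sets {0,1}; u1 a b is player 1's payoff when 1 plays a and 2 plays b,
  u2 a b is player 2's payoff when 2 plays a and 1 plays b.\<close>
fun iesds :: "(nat \<Rightarrow> nat \<Rightarrow> real) \<Rightarrow> (nat \<Rightarrow> nat \<Rightarrow> real) \<Rightarrow> nat \<Rightarrow> nat set \<times> nat set" where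
  "iesds u1 u2 0 = ({0, 1}, {0, 1})"
| "iesds u1 u2 (Suc k) =
     (let A = fst (iesds u1 u2 k); B = snd (iesds u1 u2 k) in
      ({a \<in> A. \<not> (\<exists>b\<in>A. \<forall>a'\<in>B. u1 b a' > u1 a a')},
       {a \<in> B. \<not> (\<exists>b\<in>B. \<forall>a'\<in>A. u2 b a' > u2 a a')}))"

definition rat1 :: "(nat \<Rightarrow> nat \<Rightarrow> real) \<Rightarrow> (nat \<Rightarrow> nat \<Rightarrow> real) \<Rightarrow> nat set" where
  "rat1 u1 u2 = (\<Inter>k. fst (iesds u1 u2 k))"

definition rat2 :: "(nat \<Rightarrow> nat \<Rightarrow> real) \<Rightarrow> (nat \<Rightarrow> nat \<Rightarrow> real) \<Rightarrow> nat set" where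
  "rat2 u1 u2 = (\<Inter>k. snd (iesds u1 u2 k))"

definition R1 :: "real \<Rightarrow> real \<Rightarrow> real \<Rightarrow> real \<times> real \<Rightarrow> nat set" where
  "R1 \<alpha> \<eta> \<tau> e = rat1 (profit \<alpha> \<eta> \<tau> (fst e)) (profit \<alpha> \<eta> \<tau> (snd e))"

definition R2 :: "real \<Rightarrow> real \<Rightarrow> real \<Rightarrow> real \<times> real \<Rightarrow> nat set" where
  "R2 \<alpha> \<eta> \<tau> e = rat2 (profit \<alpha> \<eta> \<tau> (fst e)) (profit \<alpha> \<eta> \<tau> (snd e))"

definition no_entry :: "real \<Rightarrow> real \<Rightarrow> real \<Rightarrow> real \<times> real \<Rightarrow> bool" where
  "no_entry \<alpha> \<eta> \<tau> e \<longleftrightarrow> R1 \<alpha> \<eta> \<tau> e \<noteq> {1} \<and> R2 \<alpha> \<eta> \<tau> e \<noteq> {1}"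

definition N2 :: "(real \<times> real) measure" where
  "N2 = density lborel std_normal_density \<Otimes>\<^sub>M density lborel std_normal_density"

definition P_none :: "real \<Rightarrow> real \<Rightarrow> real \<Rightarrow> real" where
  "P_none \<alpha> \<eta> \<tau> = measure N2 {e. no_entry \<alpha> \<eta> \<tau> e}"

end

theory Submission
  imports Defs
begin

lemma iesds1:
  fixes u1 u2 :: "nat \<Rightarrow> nat \<Rightarrow> real"
  assumes "\<And>y. u1 0 y = 0" "\<And>y. u2 0 y = 0" "u1 1 1 < u1 1 0" "u2 1 1 < u2 1 0"
  shows "iesds u1 u2 1 = (if 0 < u1 1 1 then {1} else if u1 1 0 < 0 then {0} else {0,1},
                          if 0 < u2 1 1 then {1} else if u2 1 0 < 0 then {0} else {0,1})"
  using assms by (auto simp: Let_def)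

definition st2 :: "real \<Rightarrow> real \<Rightarrow> real \<Rightarrow> real \<Rightarrow> nat set" where
  "st2 p1 q1 p2 q2 = (if 0<p1 then {1} else if q1<0 then {0} else (if 0<p2 then (if p1<0 then {0} else {0,1}) else if q2<0 then (if 0<q1 then {1} else {0,1}) else {0,1}))"

lemma iesds2:
  fixes u1 u2 :: "nat \<Rightarrow> nat \<Rightarrow> real"
  assumes "\<And>y. u1 0 y = 0" "\<And>y. u2 0 y = 0" "u1 1 1 < u1 1 0" "u2 1 1 < u2 1 0"
  shows "iesds u1 u2 2 = (st2 (u1 1 1) (u1 1 0) (u2 1 1) (u2 1 0), st2 (u2 1 1) (u2 1 0) (u1 1 1) (u1 1 0))"
proof -
  have "iesds u1 u2 2 = iesds u1 u2 (Suc 1)" by (simp only: Suc_1)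
  also have "\<dots> = (let A = fst (iesds u1 u2 1); B = snd (iesds u1 u2 1) in
      ({a \<in> A. \<not> (\<exists>b\<in>A. \<forall>a'\<in>B. u1 b a' > u1 a a')},
       {a \<in> B. \<not> (\<exists>b\<in>B. \<forall>a'\<in>A. u2 b a' > u2 a a')}))" by (rule iesds.simps(2))
  also have "\<dots> = (st2 (u1 1 1) (u1 1 0) (u2 1 1) (u2 1 0), st2 (u2 1 1) (u2 1 0) (u1 1 1) (u1 1 0))"
    unfolding iesds1[OF assms] st2_def using assms by (auto simp: Let_def)
  finally show ?thesis .
qed

lemma iesds3:
  fixes u1 u2 :: "nat \<Rightarrow> nat \<Rightarrow> real"
  assumes "\<And>y. u1 0 y = 0" "\<And>y. u2 0 y = 0" "u1 1 1 < u1 1 0" "u2 1 1 < u2 1 0"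
  shows "iesds u1 u2 (Suc 2) = iesds u1 u2 2"
proof -
  have "iesds u1 u2 (Suc 2) = (let A = fst (iesds u1 u2 2); B = snd (iesds u1 u2 2) in
      ({a \<in> A. \<not> (\<exists>b\<in>A. \<forall>a'\<in>B. u1 b a' > u1 a a')},
       {a \<in> B. \<not> (\<exists>b\<in>B. \<forall>a'\<in>A. u2 b a' > u2 a a')}))" by (rule iesds.simps(2))
  also have "\<dots> = iesds u1 u2 2"
    unfolding iesds2[OF assms] st2_def using assms by (auto simp: Let_def)
  finally show ?thesis .
qed
lemma iesds_dec: "fst (iesds u1 u2 (Suc k)) \<subseteq> fst (iesds u1 u2 k)" "snd (iesds u1 u2 (Suc k)) \<subseteq> snd (iesds u1 u2 k)"
  by (auto simp: Let_def)

lemma iesds_antimono: "j \<le> k \<Longrightarrow> fst (iesds u1 u2 k) \<subseteq> fst (iesds u1 u2 j) \<and> snd (iesds u1 u2 k) \<subseteq> snd (iesds u1 u2 j)"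
proof (induction k)
  case 0 then show ?case by simp
next
  case (Suc k)
  show ?case
  proof (cases "j = Suc k")
    case False
    then have "j \<le> k" using Suc.prems by simp
    then show ?thesis using Suc.IH iesds_dec[of u1 u2 k] by blast
  qed simp
qed

lemma iesds_stat: "iesds u1 u2 (Suc K) = iesds u1 u2 K \<Longrightarrow> iesds u1 u2 (K + j) = iesds u1 u2 K"
proof (induction j)
  case 0 then show ?case by simp
next
  case (Suc j)
  have "iesds u1 u2 (K + Suc j) = iesds u1 u2 (Suc (K + j))" by simp
  also have "\<dots> = iesds u1 u2 (Suc K)"
    by (simp only: iesds.simps(2) Suc.IH[OF Suc.prems])
  finally show ?case using Suc.prems by simp
qed

lemma rat_eq:
  assumes "iesds u1 u2 (Suc K) = iesds u1 u2 K"
  shows "rat1 u1 u2 = fst (iesds u1 u2 K)" "rat2 u1 u2 = snd (iesds u1 u2 K)"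
proof -
  have "fst (iesds u1 u2 K) \<subseteq> fst (iesds u1 u2 k) \<and> snd (iesds u1 u2 K) \<subseteq> snd (iesds u1 u2 k)" for k
  proof (cases "k \<le> K")
    case True then show ?thesis using iesds_antimono by blast
  next
    case False
    then obtain j where "k = K + j" by (metis le_add_diff_inverse nat_le_linear)
    then show ?thesis using iesds_stat[OF assms] by simp
  qed
  then show "rat1 u1 u2 = fst (iesds u1 u2 K)" "rat2 u1 u2 = snd (iesds u1 u2 K)"
    unfolding rat1_def rat2_def by blast+
qed

lemma no_entry_iff:
  assumes eta: "\<eta> > 0"
  shows "no_entry \<alpha> \<eta> \<tau> e \<longleftrightarrow>
     e \<in> {\<alpha>+\<tau>+\<eta>..} \<times> {\<alpha>+\<tau>+\<eta>..} \<union> {\<alpha>+\<tau>..\<alpha>+\<tau>+\<eta>} \<times> {\<alpha>+\<tau>..\<alpha>+\<tau>+\<eta>}"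
proof -
  obtain e1 e2 where e: "e = (e1, e2)" by (cases e)
  define u1 where "u1 = profit \<alpha> \<eta> \<tau> e1"
  define u2 where "u2 = profit \<alpha> \<eta> \<tau> e2"
  have h: "\<And>y. u1 0 y = 0" "\<And>y. u2 0 y = 0" "u1 1 1 < u1 1 0" "u2 1 1 < u2 1 0"
    unfolding u1_def u2_def profit_def using eta by auto
  have v: "u1 1 1 = \<alpha>+\<tau>-e1" "u1 1 0 = \<alpha>+\<tau>+\<eta>-e1" "u2 1 1 = \<alpha>+\<tau>-e2" "u2 1 0 = \<alpha>+\<tau>+\<eta>-e2"
    unfolding u1_def u2_def profit_def by auto
  have "R1 \<alpha> \<eta> \<tau> e = st2 (\<alpha>+\<tau>-e1) (\<alpha>+\<tau>+\<eta>-e1) (\<alpha>+\<tau>-e2) (\<alpha>+\<tau>+\<eta>-e2)"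
    unfolding R1_def e fst_conv snd_conv u1_def[symmetric] u2_def[symmetric]
      rat_eq(1)[OF iesds3[OF h]] iesds2[OF h] v by simp
  moreover have "R2 \<alpha> \<eta> \<tau> e = st2 (\<alpha>+\<tau>-e2) (\<alpha>+\<tau>+\<eta>-e2) (\<alpha>+\<tau>-e1) (\<alpha>+\<tau>+\<eta>-e1)"
    unfolding R2_def e fst_conv snd_conv u1_def[symmetric] u2_def[symmetric]
      rat_eq(2)[OF iesds3[OF h]] iesds2[OF h] v by simp
  ultimately show ?thesis
    unfolding no_entry_def e st2_def using eta by auto
qed
definition mu :: "real measure" where "mu = density lborel std_normal_density"

lemma prob_mu: "prob_space mu"
  unfolding mu_def by (rule prob_space_normal_density) simp

lemma sets_mu[simp]: "sets mu = sets borel"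
  unfolding mu_def by simp

lemma space_mu[simp]: "space mu = UNIV"
  unfolding mu_def by simp

lemma N2_eq: "N2 = mu \<Otimes>\<^sub>M mu"
  unfolding N2_def mu_def ..

lemma prob_N2: "prob_space N2"
proof -
  interpret p: prob_space mu by (rule prob_mu)
  interpret pp: pair_prob_space mu mu by unfold_locales
  show ?thesis unfolding N2_eq by (rule pp.P.prob_space_axioms)
qed

lemma measure_N2_times:
  assumes "A \<in> sets borel" "B \<in> sets borel"
  shows "measure N2 (A \<times> B) = measure mu A * measure mu B"
proof -
  interpret p: prob_space mu by (rule prob_mu)
  have "emeasure N2 (A \<times> B) = emeasure mu A * emeasure mu B"
    unfolding N2_eq using assms by (intro p.emeasure_pair_measure_Times) auto
  then show ?thesis
    by (simp add: measure_def enn2real_mult)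
qed

lemma mu_point: "measure mu {x} = 0"
proof -
  have "emeasure mu {x} = (\<integral>\<^sup>+ y. ennreal (std_normal_density y) * indicator {x} y \<partial>lborel)"
    unfolding mu_def by (rule emeasure_density) auto
  also have "\<dots> = (\<integral>\<^sup>+ y. ennreal (std_normal_density x) * indicator {x} y \<partial>lborel)"
    by (intro nn_integral_cong) (auto split: split_indicator)
  also have "\<dots> = 0" by simp
  finally show ?thesis by (simp add: measure_def)
qed
definition Fn :: "real \<Rightarrow> real" where "Fn x = measure mu {..x}"

lemma mu_union: "A \<in> sets borel \<Longrightarrow> B \<in> sets borel \<Longrightarrow> A \<inter> B = {} \<Longrightarrow>
   measure mu (A \<union> B) = measure mu A + measure mu B"
proof -
  interpret p: prob_space mu by (rule prob_mu)
  show "A \<in> sets borel \<Longrightarrow> B \<in> sets borel \<Longrightarrow> A \<inter> B = {} \<Longrightarrow> ?thesis"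
    by (rule p.finite_measure_Union) auto
qed

lemma mu_Ioc: assumes "a \<le> b" shows "measure mu {a<..b} = Fn b - Fn a"
proof -
  have "{..b} = {..a} \<union> {a<..b}" using assms by auto
  moreover have "measure mu ({..a} \<union> {a<..b}) = measure mu {..a} + measure mu {a<..b}"
    by (rule mu_union) auto
  ultimately have "measure mu {..b} = measure mu {..a} + measure mu {a<..b}" by simp
  then show ?thesis unfolding Fn_def by simp
qed

lemma mu_Icc: assumes "a \<le> b" shows "measure mu {a..b} = Fn b - Fn a"
proof -
  have "{a..b} = {a} \<union> {a<..b}" using assms by auto
  then have "measure mu {a..b} = measure mu {a} + measure mu {a<..b}"
    by (simp add: mu_union del: insert_is_Un Un_insert_left)
  then show ?thesis using mu_Ioc[OF assms] mu_point by simp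
qed

lemma mu_Ici: "measure mu {a..} = 1 - Fn a"
proof -
  interpret p: prob_space mu by (rule prob_mu)
  have "UNIV = {..a} \<union> {a<..}" by auto
  moreover have "measure mu ({..a} \<union> {a<..}) = measure mu {..a} + measure mu {a<..}"
    by (rule mu_union) auto
  ultimately have "measure mu UNIV = measure mu {..a} + measure mu {a<..}" by simp
  moreover have "measure mu UNIV = 1" using p.prob_space by simp
  moreover have "{a..} = {a} \<union> {a<..}" by auto
  then have "measure mu {a..} = measure mu {a} + measure mu {a<..}"
    by (simp add: mu_union del: insert_is_Un Un_insert_left)
  ultimately show ?thesis unfolding Fn_def using mu_point by simp
qed

lemma Fn_bounds: "0 \<le> Fn x" "Fn x \<le> 1"
proof -
  interpret p: prob_space mu by (rule prob_mu)
  show "0 \<le> Fn x" unfolding Fn_def by simp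
  show "Fn x \<le> 1" unfolding Fn_def by simp
qed
lemma second_moment: "integral\<^sup>L lborel (\<lambda>x. std_normal_density x * x^2) = 1"
  using integral_std_normal_moment_even[of 1] by simp

lemma tail_bound:
  assumes t: "t > 0"
  shows "measure mu {x. t \<le> \<bar>x\<bar>} \<le> 1 / t^2"
proof -
  interpret p: prob_space mu by (rule prob_mu)
  have S: "{x::real. t \<le> \<bar>x\<bar>} \<in> sets borel" by measurable
  have "emeasure mu {x. t \<le> \<bar>x\<bar>} = (\<integral>\<^sup>+ y. ennreal (std_normal_density y) * indicator {x. t \<le> \<bar>x\<bar>} y \<partial>lborel)"
    unfolding mu_def by (rule emeasure_density) (use S in auto)
  also have "\<dots> \<le> (\<integral>\<^sup>+ y. ennreal (std_normal_density y * y^2 / t^2) \<partial>lborel)"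
  proof (intro nn_integral_mono)
    fix y :: real
    show "ennreal (std_normal_density y) * indicator {x. t \<le> \<bar>x\<bar>} y \<le> ennreal (std_normal_density y * y^2 / t^2)"
    proof (cases "t \<le> \<bar>y\<bar>")
      case True
      have "t^2 \<le> y^2" using True t
        by (metis abs_ge_zero abs_of_pos power2_abs power_mono)
      then have "1 \<le> y^2 / t^2" using t by simp
      then have "std_normal_density y * 1 \<le> std_normal_density y * (y^2 / t^2)"
        by (intro mult_left_mono) (auto simp: normal_density_nonneg)
      then show ?thesis using True by (simp add: ennreal_leI)
    qed simp
  qed
  also have "\<dots> = ennreal (integral\<^sup>L lborel (\<lambda>y. std_normal_density y * y^2 / t^2))"
    by (intro nn_integral_eq_integral)
       (auto intro!: integrable_divide integrable_std_normal_moment simp: normal_density_nonneg)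
  also have "integral\<^sup>L lborel (\<lambda>y. std_normal_density y * y^2 / t^2) = 1 / t^2"
    using second_moment by simp
  finally have "emeasure mu {x. t \<le> \<bar>x\<bar>} \<le> ennreal (1/t^2)" .
  then show ?thesis
    using p.emeasure_eq_measure by (simp add: ennreal_le_iff)
qed

lemma interval_lower:
  assumes "a \<le> b" "0 \<le> m" "\<And>x. a < x \<Longrightarrow> x \<le> b \<Longrightarrow> m \<le> std_normal_density x"
  shows "m * (b - a) \<le> measure mu {a<..b}"
proof -
  interpret p: prob_space mu by (rule prob_mu)
  have "ennreal (m * (b - a)) = (\<integral>\<^sup>+ y. ennreal m * indicator {a<..b} y \<partial>lborel)"
    using assms by (simp add: nn_integral_cmult_indicator ennreal_mult)
  also have "\<dots> \<le> (\<integral>\<^sup>+ y. ennreal (std_normal_density y) * indicator {a<..b} y \<partial>lborel)"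
    using assms by (intro nn_integral_mono) (auto split: split_indicator intro: ennreal_leI)
  also have "\<dots> = emeasure mu {a<..b}"
    unfolding mu_def by (rule emeasure_density[symmetric]) auto
  finally show ?thesis
    using p.emeasure_eq_measure by (simp add: ennreal_le_iff)
qed

lemma interval_upper:
  assumes "a \<le> b" "0 \<le> m" "\<And>x. a < x \<Longrightarrow> x \<le> b \<Longrightarrow> std_normal_density x \<le> m"
  shows "measure mu {a<..b} \<le> m * (b - a)"
proof -
  interpret p: prob_space mu by (rule prob_mu)
  have "emeasure mu {a<..b} = (\<integral>\<^sup>+ y. ennreal (std_normal_density y) * indicator {a<..b} y \<partial>lborel)"
    unfolding mu_def by (rule emeasure_density) auto
  also have "\<dots> \<le> (\<integral>\<^sup>+ y. ennreal m * indicator {a<..b} y \<partial>lborel)"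
    using assms by (intro nn_integral_mono) (auto split: split_indicator intro: ennreal_leI)
  also have "\<dots> = ennreal (m * (b - a))"
    using assms by (simp add: nn_integral_cmult_indicator ennreal_mult)
  finally show ?thesis
    using p.emeasure_eq_measure assms by (simp add: ennreal_le_iff)
qed
lemma P_formula:
  assumes eta: "\<eta> > 0"
  shows "P_none \<alpha> \<eta> \<tau> = (1 - Fn (\<alpha>+\<tau>+\<eta>))^2 + (Fn (\<alpha>+\<tau>+\<eta>) - Fn (\<alpha>+\<tau>))^2"
proof -
  interpret p: prob_space N2 by (rule prob_N2)
  define c where "c = \<alpha>+\<tau>"
  define d where "d = \<alpha>+\<tau>+\<eta>"
  have cd: "c < d" using eta unfolding c_def d_def by simp
  have sN2: "sets N2 = sets (borel \<Otimes>\<^sub>M borel)"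
    unfolding N2_eq by (intro sets_pair_measure_cong) auto
  define A where "A = {d..} \<times> {d..}"
  define B where "B = {c..d} \<times> {c..d}"
  have set_eq: "{e. no_entry \<alpha> \<eta> \<tau> e} = A \<union> B"
    using no_entry_iff[OF eta] unfolding A_def B_def c_def d_def by auto
  have AB: "A \<in> sets N2" "B \<in> sets N2" unfolding sN2 A_def B_def by auto
  have fm: "A \<in> fmeasurable N2" "B \<in> fmeasurable N2"
    using AB p.fmeasurable_eq_sets by auto
  have "A \<inter> B = {d} \<times> {d}" unfolding A_def B_def using cd by auto
  moreover have "measure N2 ({d} \<times> {d}) = measure mu {d} * measure mu {d}"
    by (rule measure_N2_times) auto
  ultimately have mAB: "measure N2 (A \<inter> B) = 0"
    using mu_point by simp
  have mA: "measure N2 A = (1 - Fn d)^2"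
    unfolding A_def by (simp add: measure_N2_times mu_Ici power2_eq_square)
  have mB: "measure N2 B = (Fn d - Fn c)^2"
    unfolding B_def using cd by (simp add: measure_N2_times mu_Icc power2_eq_square)
  have "P_none \<alpha> \<eta> \<tau> = measure N2 (A \<union> B)" unfolding P_none_def set_eq ..
  also have "\<dots> = measure N2 A + measure N2 B - measure N2 (A \<inter> B)"
    by (rule measure_Un3[OF fm])
  finally show ?thesis using mA mB mAB unfolding c_def d_def by simp
qed
lemma phi_le: "y^2 \<le> x^2 \<Longrightarrow> std_normal_density x \<le> std_normal_density y"
proof -
  assume "y^2 \<le> x^2"
  then have "exp (- (x^2 / 2)) \<le> exp (- (y^2 / 2))" by simp
  then show ?thesis unfolding std_normal_density_def by (simp add: divide_right_mono)
qed

lemma Fn_left_tail: assumes "c < 0" shows "Fn c \<le> 1 / c^2"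
proof -
  interpret p: prob_space mu by (rule prob_mu)
  have "Fn c \<le> measure mu {x. -c \<le> \<bar>x\<bar>}"
    unfolding Fn_def using assms by (intro p.finite_measure_mono) auto
  also have "\<dots> \<le> 1 / (-c)^2" using assms by (intro tail_bound) auto
  finally show ?thesis by simp
qed

lemma Fn_right_tail: assumes "d > 0" shows "1 - Fn d \<le> 1 / d^2"
proof -
  interpret p: prob_space mu by (rule prob_mu)
  have "1 - Fn d = measure mu {d..}" by (simp add: mu_Ici)
  also have "\<dots> \<le> measure mu {x. d \<le> \<bar>x\<bar>}"
    using assms by (intro p.finite_measure_mono) auto
  also have "\<dots> \<le> 1 / d^2" using assms by (intro tail_bound) auto
  finally show ?thesis .
qed

lemma exp_key:
  assumes "x^2 + 14 \<le> y^2"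
  shows "std_normal_density y < std_normal_density x * (9/20)"
proof -
  have "exp (- (y^2/2)) = exp (- (x^2/2)) * exp (- ((y^2 - x^2)/2))"
    by (simp add: exp_add[symmetric] field_simps)
  also have "exp (- ((y^2 - x^2)/2)) \<le> exp (-7)" using assms by simp
  also have "exp (-7::real) < 9/20"
  proof -
    have "(8::real) \<le> exp 7" using exp_ge_add_one_self[of 7] by simp
    then have "exp (-7::real) \<le> 1/8" by (simp add: exp_minus field_simps)
    then show ?thesis by simp
  qed
  finally have "exp (- (y^2/2)) < exp (- (x^2/2)) * (9/20)" by simp
  then have "exp (- (y^2/2)) / sqrt (2*pi) < (exp (- (x^2/2)) * (9/20)) / sqrt (2*pi)"
    by (intro divide_strict_right_mono) auto
  then show ?thesis unfolding std_normal_density_def by simp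
qed
lemma main_ineq:
  fixes c c' \<eta> :: real
  assumes cc: "-5 < c" "c < c'" "c' < -23/5" and eta: "7 < \<eta>" "\<eta> < 36/5"
  shows "(1 - Fn (c+\<eta>))^2 + (Fn (c+\<eta>) - Fn c)^2 < (1 - Fn (c'+\<eta>))^2 + (Fn (c'+\<eta>) - Fn c')^2"
proof -
  interpret p: prob_space mu by (rule prob_mu)
  define d where "d = c + \<eta>"
  define d' where "d' = c' + \<eta>"
  define \<delta> where "\<delta> = c' - c"
  define T where "T = 1 - Fn d"
  define M where "M = Fn d - Fn c"
  define a where "a = Fn d' - Fn d"
  define b where "b = Fn c' - Fn c"
  have dpos: "2 < d" "d < d'" "d' < 13/5" using cc eta unfolding d_def d'_def by auto
  have dl: "\<delta> > 0" using cc unfolding \<delta>_def by simp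
  have a_eq: "a = measure mu {d<..d'}" using mu_Ioc[of d d'] dpos unfolding a_def by simp
  have b_eq: "b = measure mu {c<..c'}" using mu_Ioc[of c c'] cc unfolding b_def by simp
  have a_lo: "std_normal_density d' * \<delta> \<le> a"
  proof -
    have "std_normal_density d' * (d' - d) \<le> measure mu {d<..d'}"
    proof (rule interval_lower)
      fix x assume "d < x" "x \<le> d'"
      then have "x^2 \<le> d'^2" using dpos by (intro power_mono) auto
      then show "std_normal_density d' \<le> std_normal_density x" by (rule phi_le)
    qed (use dpos in auto)
    then show ?thesis unfolding a_eq \<delta>_def d_def d'_def by simp
  qed
  have b_up: "b \<le> std_normal_density c' * \<delta>"
  proof -
    have "measure mu {c<..c'} \<le> std_normal_density c' * (c' - c)"
    proof (rule interval_upper)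
      fix x assume "c < x" "x \<le> c'"
      then have "(-c')^2 \<le> (-x)^2" using cc by (intro power_mono) auto
      then show "std_normal_density x \<le> std_normal_density c'" by (intro phi_le) simp
    qed (use cc in auto)
    then show ?thesis unfolding b_eq \<delta>_def by simp
  qed
  have b_nn: "0 \<le> b" unfolding b_eq by simp
  have Fc: "Fn c \<le> 1 / c^2" using Fn_left_tail[of c] cc by simp
  have "(23/5)^2 \<le> (-c)^2" using cc by (intro power_mono) auto
  then have c2: "(23/5)^2 \<le> c^2" by simp
  have Fc': "Fn c \<le> 1/20"
  proof -
    have c2p: "0 < c^2" using cc by simp
    have "1 / c^2 \<le> 1 / (23/5)^2" using c2 c2p by (intro divide_left_mono) auto
    moreover have "(1::real) / (23/5)^2 \<le> 1/20" by (simp add: power2_eq_square)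
    ultimately show ?thesis using Fc by linarith
  qed
  have Td: "T \<le> 1/4"
  proof -
    have "T \<le> 1 / d^2" unfolding T_def using Fn_right_tail[of d] dpos by simp
    also have "1 / d^2 \<le> 1 / 2^2" using dpos by (intro divide_left_mono power_mono) auto
    finally show ?thesis by simp
  qed
  have MT: "9/20 \<le> M - T" unfolding M_def T_def using Fc' Td unfolding T_def by simp
  have M1: "M \<le> 1" unfolding M_def using Fn_bounds[of d] Fn_bounds[of c] by simp
  have key: "std_normal_density c' < std_normal_density d' * (9/20)"
  proof (rule exp_key)
    have "d'^2 \<le> (13/5)^2" using dpos by (intro power_mono) auto
    moreover have "(23/5)^2 \<le> (-c')^2" using cc by (intro power_mono) auto
    moreover have "(13/5::real)^2 = 169/25" "(23/5::real)^2 = 529/25" by (simp_all add: power2_eq_square)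
    ultimately show "d'^2 + 14 \<le> c'^2" by simp
  qed
  have phid: "0 \<le> std_normal_density d'" by (simp add: normal_density_nonneg)
  have a_nn: "0 \<le> a" using a_lo phid dl by (meson mult_nonneg_nonneg less_imp_le order_trans)
  have "b \<le> std_normal_density c' * \<delta>" by (rule b_up)
  also have "\<dots> < std_normal_density d' * (9/20) * \<delta>" using key dl by simp
  also have "\<dots> \<le> a * (9/20)" using a_lo by (simp add: mult.commute mult.left_commute)
  also have "\<dots> \<le> a * (M - T)" using MT a_nn by (intro mult_left_mono) auto
  finally have ab: "b < a * (M - T)" .
  have Mb: "M * b \<le> b" using mult_right_mono[OF M1 b_nn] by simp
  have "(1 - Fn d')^2 + (Fn d' - Fn c')^2 = (T - a)^2 + (M + a - b)^2"
    unfolding T_def M_def a_def b_def by simp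
  also have "\<dots> = T^2 + M^2 + 2 * (a * (M - T) - M * b) + a^2 + (a - b)^2"
    by (simp add: power2_eq_square algebra_simps)
  finally have eq: "(1 - Fn d')^2 + (Fn d' - Fn c')^2 = T^2 + M^2 + 2 * (a * (M - T) - M * b) + a^2 + (a - b)^2" .
  have "T^2 + M^2 < T^2 + M^2 + 2 * (a * (M - T) - M * b) + a^2 + (a - b)^2"
  proof -
    have "M * b < a * (M - T)" using Mb ab by (rule le_less_trans)
    then have h1: "0 < 2 * (a * (M - T) - M * b)" by simp
    have "0 < 2 * (a * (M - T) - M * b) + a^2 + (a - b)^2"
      by (intro add_pos_nonneg h1 zero_le_power2)
    then show ?thesis by (simp add: add.assoc)
  qed
  then show ?thesis using eq unfolding T_def M_def d_def d'_def by simp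
qed

lemma prop8_concrete:
  "open ({-5<..<-24/5::real} \<times> {7<..<36/5::real}) \<and>
   {-5<..<-24/5::real} \<times> {7<..<36/5::real} \<noteq> {} \<and> (1/5::real) > 0 \<and>
   (\<forall>\<alpha> \<eta>. (\<alpha>, \<eta>) \<in> {-5<..<-24/5::real} \<times> {7<..<36/5::real} \<longrightarrow>
       strict_mono_on {0..<1/5} (P_none \<alpha> \<eta>))"
proof (intro conjI allI impI)
  show "open ({-5<..<-24/5::real} \<times> {7<..<36/5::real})" by (intro open_Times) auto
  have "(-49/10, 71/10) \<in> {-5<..<-24/5::real} \<times> {7<..<36/5::real}" by auto
  then show "{-5<..<-24/5::real} \<times> {7<..<36/5::real} \<noteq> {}" by blast
  show "(1/5::real) > 0" by simp
next
  fix \<alpha> \<eta> :: real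
  assume h: "(\<alpha>, \<eta>) \<in> {-5<..<-24/5::real} \<times> {7<..<36/5::real}"
  show "strict_mono_on {0..<1/5} (P_none \<alpha> \<eta>)"
  proof (rule strict_mono_onI)
    fix r s :: real assume rs: "r \<in> {0..<1/5}" "s \<in> {0..<1/5}" "r < s"
    have eta: "\<eta> > 0" using h by simp
    have "(1 - Fn ((\<alpha>+r)+\<eta>))^2 + (Fn ((\<alpha>+r)+\<eta>) - Fn (\<alpha>+r))^2
        < (1 - Fn ((\<alpha>+s)+\<eta>))^2 + (Fn ((\<alpha>+s)+\<eta>) - Fn (\<alpha>+s))^2"
      using h rs by (intro main_ineq) auto
    then show "P_none \<alpha> \<eta> r < P_none \<alpha> \<eta> s"
      unfolding P_formula[OF eta] by (simp add: add.assoc)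
  qed
qed

theorem proposition8:
  shows "\<exists>(\<Xi> :: (real \<times> real) set) \<tau>bar. open \<Xi> \<and> \<Xi> \<noteq> {} \<and> \<tau>bar > 0 \<and>
           (\<forall>\<alpha> \<eta>. (\<alpha>, \<eta>) \<in> \<Xi> \<longrightarrow> strict_mono_on {0..<\<tau>bar} (P_none \<alpha> \<eta>))"
  using prop8_concrete by blast

thm_deps proposition8

end
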